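(* Let $1\to N\to G\to Q\to1$ be a short exact sequence of groups. If $G$ is SQ-universal, then $N$ or $Q$ is SQ-universal.
   Context: A group $G$ is SQ-universal if every countable group embeds in some quotient of $G$. *)

theory Defs
  imports "HOL-Algebra.Algebra"
begin

text \<open>Every countable group is isomorphic to a group whose carrier is a subset of the
  natural numbers; conversely such groups are countable. Hence quantifying over groups
  of type nat monoid is quantifying over all countable groups up to isomorphism.\<close>

definition SQ_universal :: "('a, 'b) monoid_scheme \<Rightarrow> bool" where
  "SQ_universal G \<longleftrightarrow>
     (\<forall>H :: nat monoid. group H \<longrightarrow>
        (\<exists>K h. K \<lhd> G \<and> h \<in> hom H (G Mod K) \<and> inj_on h (carrier H)))"

definition short_exact ::
  "('a, 'x) monoid_scheme \<Rightarrow> ('b, 'y) monoid_scheme \<Rightarrow> ('c, 'z) monoid_scheme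
   \<Rightarrow> ('a \<Rightarrow> 'b) \<Rightarrow> ('b \<Rightarrow> 'c) \<Rightarrow> bool" where
  "short_exact N G Q i p \<longleftrightarrow>
     group N \<and> group G \<and> group Q \<and>
     i \<in> hom N G \<and> inj_on i (carrier N) \<and>
     p \<in> hom G Q \<and> p ` carrier G = carrier Q \<and>
     i ` carrier N = kernel G Q p"

end

theory Submission
  imports Defs "HOL-Library.Countable_Set"
begin


definition PG :: "('w \<Rightarrow> 'w) monoid" where
  "PG = \<lparr>carrier = {f. bij f}, monoid.mult = (\<circ>), one = id\<rparr>"

lemma PG_simps[simp]: "carrier PG = {f. bij f}" "monoid.mult PG = (\<circ>)" "one PG = id"
  by (simp_all add: PG_def)

lemma group_PG: "group PG"
proof (rule groupI)
  fix x assume "x \<in> carrier (PG :: ('w \<Rightarrow> 'w) monoid)"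
  then have "bij x" by simp
  then show "\<exists>y\<in>carrier PG. y \<otimes>\<^bsub>PG\<^esub> x = \<one>\<^bsub>PG\<^esub>"
    by (intro bexI[of _ "inv_into UNIV x"]) (auto simp: bij_imp_bij_inv bij_is_inj)
qed (auto simp: bij_comp o_assoc)

lemma PG_inv:
  assumes "bij f" "g \<circ> f = id" "f \<circ> g = id"
  shows "inv\<^bsub>PG\<^esub> f = g"
proof -
  have "bij g" using assms by (metis bij_betw_def comp_eq_id_dest inj_on_id inj_on_imageI2 o_bij)
  then show ?thesis using group.inv_equality[OF group_PG, of g f] assms by simp
qed

lemma foldr_comp_id: "foldr (\<circ>) xs g = foldr (\<circ>) xs id \<circ> g"
  by (induction xs) (auto simp: o_assoc)

lemma foldr_append_comp: "foldr (\<circ>) (l1@l2) id = foldr (\<circ>) l1 id \<circ> foldr (\<circ>) l2 id"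
  by (simp only: foldr_append foldr_comp_id[of l1 "foldr (\<circ>) l2 id"])

lemma generate_PG_countable:
  assumes "countable S" "S \<subseteq> carrier PG"
  shows "countable (generate PG S)"
proof -
  let ?W = "(\<lambda>l. foldr (\<circ>) l id) ` lists (S \<union> m_inv PG ` S)"
  have "generate PG S \<subseteq> ?W"
  proof
    fix h assume "h \<in> generate PG S"
    then show "h \<in> ?W"
    proof induction
      case one
      show ?case by (auto intro!: image_eqI[of _ _ "[]"])
    next
      case (incl h)
      then show ?case by (auto intro!: image_eqI[of _ _ "[h]"])
    next
      case (inv h)
      then show ?case by (auto intro!: image_eqI[of _ _ "[inv\<^bsub>PG\<^esub> h]"])
    next
      case (eng h1 h2)
      from eng.IH(1) obtain l1 where "l1 \<in> lists (S \<union> m_inv PG ` S)" "h1 = foldr (\<circ>) l1 id" by blast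
      moreover from eng.IH(2) obtain l2 where "l2 \<in> lists (S \<union> m_inv PG ` S)" "h2 = foldr (\<circ>) l2 id" by blast
      ultimately show ?case
        by (intro image_eqI[of _ _ "l1 @ l2"]) (simp_all only: PG_simps foldr_append_comp, auto)
    qed
  qed
  moreover have "countable ?W" using assms by auto
  ultimately show ?thesis by (rule countable_subset)
qed

lemma transport_nat:
  fixes H :: "('a, 'b) monoid_scheme"
  assumes "group H" "countable (carrier H)"
  obtains H' :: "nat monoid" and f where "group H'" "f \<in> hom H H'" "inj_on f (carrier H)"
proof -
  interpret H: group H by fact
  define e where "e = to_nat_on (carrier H)"
  have inj: "inj_on e (carrier H)" unfolding e_def using assms(2) by (rule inj_on_to_nat_on)
  define fr where "fr = inv_into (carrier H) e"
  have fr: "\<And>x. x \<in> carrier H \<Longrightarrow> fr (e x) = x" unfolding fr_def using inj by simp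
  define H' :: "nat monoid" where
    "H' = \<lparr>carrier = e ` carrier H, monoid.mult = (\<lambda>x y. e (fr x \<otimes>\<^bsub>H\<^esub> fr y)), one = e \<one>\<^bsub>H\<^esub>\<rparr>"
  have "group H'"
  proof (rule groupI)
    fix x assume "x \<in> carrier H'"
    then obtain a where a: "a \<in> carrier H" "x = e a" by (auto simp: H'_def)
    then show "\<exists>y\<in>carrier H'. y \<otimes>\<^bsub>H'\<^esub> x = \<one>\<^bsub>H'\<^esub>"
      by (intro bexI[of _ "e (inv\<^bsub>H\<^esub> a)"]) (auto simp: H'_def fr)
  qed (auto simp: H'_def fr H.m_assoc)
  moreover have "e \<in> hom H H'"
    by (rule homI) (auto simp: H'_def fr)
  ultimately show ?thesis using that inj by blast
qed



definition Tp :: "nat monoid \<Rightarrow> nat \<Rightarrow> nat \<times> nat \<times> int \<Rightarrow> nat \<times> nat \<times> int" where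
  "Tp B2 t = (\<lambda>(b,y,n). (b, if y \<in> carrier B2 then t \<otimes>\<^bsub>B2\<^esub> y else y, n))"
definition Zp :: "nat monoid \<Rightarrow> int \<Rightarrow> nat \<times> nat \<times> int \<Rightarrow> nat \<times> nat \<times> int" where
  "Zp B2 d = (\<lambda>(b,y,n). (b, y, if y = \<one>\<^bsub>B2\<^esub> then n + d else n))"
definition Gp :: "nat monoid \<Rightarrow> nat monoid \<Rightarrow> nat \<Rightarrow> nat \<times> nat \<times> int \<Rightarrow> nat \<times> nat \<times> int" where
  "Gp B1 B2 a = (\<lambda>(b,y,n). (if b \<in> carrier B1 \<and> y = \<one>\<^bsub>B2\<^esub> \<and> n \<le> 0 then a \<otimes>\<^bsub>B1\<^esub> b else b, y, n))"
definition Ep :: "nat monoid \<Rightarrow> nat monoid \<Rightarrow> nat \<Rightarrow> nat \<times> nat \<times> int \<Rightarrow> nat \<times> nat \<times> int" where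
  "Ep B1 B2 a = (\<lambda>(b,y,n). (if b \<in> carrier B1 \<and> y = \<one>\<^bsub>B2\<^esub> \<and> n = 1 then a \<otimes>\<^bsub>B1\<^esub> b else b, y, n))"

lemma Tp_comp: assumes "group B2" "s \<in> carrier B2" "t \<in> carrier B2"
  shows "Tp B2 s \<circ> Tp B2 t = Tp B2 (s \<otimes>\<^bsub>B2\<^esub> t)"
  proof - interpret group B2 by fact show ?thesis using assms by (intro ext) (auto simp: Tp_def m_assoc) qed

lemma Tp_one: assumes "group B2" shows "Tp B2 \<one>\<^bsub>B2\<^esub> = id"
  using assms by (auto simp: Tp_def group.is_monoid)

lemma Zp_comp: "Zp B2 d \<circ> Zp B2 d' = Zp B2 (d + d')"
  by (auto simp: Zp_def)

lemma Zp_zero: "Zp B2 0 = id"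
  by (auto simp: Zp_def)

lemma Gp_comp: assumes "group B1" "a \<in> carrier B1" "a' \<in> carrier B1"
  shows "Gp B1 B2 a \<circ> Gp B1 B2 a' = Gp B1 B2 (a \<otimes>\<^bsub>B1\<^esub> a')"
  proof - interpret group B1 by fact show ?thesis using assms by (intro ext) (auto simp: Gp_def m_assoc) qed

lemma Gp_one: assumes "group B1" shows "Gp B1 B2 \<one>\<^bsub>B1\<^esub> = id"
  using assms by (auto simp: Gp_def group.is_monoid)

lemma Ep_comp: assumes "group B1" "a \<in> carrier B1" "a' \<in> carrier B1"
  shows "Ep B1 B2 a \<circ> Ep B1 B2 a' = Ep B1 B2 (a \<otimes>\<^bsub>B1\<^esub> a')"
  proof - interpret group B1 by fact show ?thesis using assms by (intro ext) (auto simp: Ep_def m_assoc) qed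

lemma Ep_one: assumes "group B1" shows "Ep B1 B2 \<one>\<^bsub>B1\<^esub> = id"
  using assms by (auto simp: Ep_def group.is_monoid)

lemma key_identity:
  assumes "group B1" "group B2" "a \<in> carrier B1" "t \<in> carrier B2" "t \<noteq> \<one>\<^bsub>B2\<^esub>"
  shows "Ep B1 B2 (inv\<^bsub>B1\<^esub> a) = Gp B1 B2 a \<circ> (Zp B2 1 \<circ> Tp B2 t \<circ> Zp B2 (-1) \<circ> Tp B2 (inv\<^bsub>B2\<^esub> t))
     \<circ> Gp B1 B2 (inv\<^bsub>B1\<^esub> a) \<circ> (Tp B2 t \<circ> Zp B2 1 \<circ> Tp B2 (inv\<^bsub>B2\<^esub> t) \<circ> Zp B2 (-1))"
proof -
  interpret B1: group B1 by fact
  interpret B2: group B2 by fact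
  have i1: "\<And>y. y \<in> carrier B2 \<Longrightarrow> (inv\<^bsub>B2\<^esub> t \<otimes>\<^bsub>B2\<^esub> y = \<one>\<^bsub>B2\<^esub>) = (y = t)"
    using assms(4) by (metis B2.inv_closed B2.inv_comm B2.inv_equality B2.r_inv)
  have i2: "\<And>y. y \<in> carrier B2 \<Longrightarrow> t \<otimes>\<^bsub>B2\<^esub> (inv\<^bsub>B2\<^esub> t \<otimes>\<^bsub>B2\<^esub> y) = y"
    using assms(4) by (simp add: B2.m_assoc[symmetric])
  have i3: "\<And>b. b \<in> carrier B1 \<Longrightarrow> a \<otimes>\<^bsub>B1\<^esub> (inv\<^bsub>B1\<^esub> a \<otimes>\<^bsub>B1\<^esub> b) = b"
    using assms(3) by (simp add: B1.m_assoc[symmetric])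
  have i4: "inv\<^bsub>B2\<^esub> t \<otimes>\<^bsub>B2\<^esub> \<one>\<^bsub>B2\<^esub> \<noteq> \<one>\<^bsub>B2\<^esub>" using assms(4,5)
    by (metis B2.inv_closed B2.inv_inv B2.inv_one B2.r_one)
  show ?thesis
  proof (rule ext, clarify)
    fix b y and n :: int
    show "Ep B1 B2 (inv\<^bsub>B1\<^esub> a) (b, y, n) = (Gp B1 B2 a \<circ> (Zp B2 1 \<circ> Tp B2 t \<circ> Zp B2 (-1) \<circ> Tp B2 (inv\<^bsub>B2\<^esub> t))
     \<circ> Gp B1 B2 (inv\<^bsub>B1\<^esub> a) \<circ> (Tp B2 t \<circ> Zp B2 1 \<circ> Tp B2 (inv\<^bsub>B2\<^esub> t) \<circ> Zp B2 (-1))) (b, y, n)"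
      using assms i1 i2 i3 i4 by (auto simp: Ep_def Gp_def Zp_def Tp_def)
  qed
qed



locale SE =
  fixes N :: "('a, 'x) monoid_scheme" and G :: "('b, 'y) monoid_scheme"
    and Q :: "('c, 'z) monoid_scheme" and i p K
  assumes se: "short_exact N G Q i p" and nK: "K \<lhd> G"
begin

lemma grpN: "group N" and grpG: "group G" and grpQ: "group Q"
  and ihom: "i \<in> hom N G" and iinj: "inj_on i (carrier N)" and phom: "p \<in> hom G Q"
  and psurj: "p ` carrier G = carrier Q" and ker: "i ` carrier N = kernel G Q p"
  using se by (auto simp: short_exact_def)

sublocale N: group N by (rule grpN)
sublocale G: group G by (rule grpG)
sublocale Q: group Q by (rule grpQ)
sublocale K: normal K G by (rule nK)
sublocale ih: group_hom N G i by (simp add: group_hom_def group_hom_axioms_def grpN grpG ihom)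
sublocale ph: group_hom G Q p by (simp add: group_hom_def group_hom_axioms_def grpQ grpG phom)

lemma grpGK: "group (G Mod K)" by (rule K.factorgroup_is_group)

lemma cK: "U \<in> carrier (G Mod K) \<Longrightarrow> \<exists>g\<in>carrier G. U = K #>\<^bsub>G\<^esub> g"
  by (auto simp: carrier_FactGroup)

lemma cosK: "g \<in> carrier G \<Longrightarrow> K #>\<^bsub>G\<^esub> g \<in> carrier (G Mod K)"
  by (auto simp: carrier_FactGroup)

lemma mult_cos: "g \<in> carrier G \<Longrightarrow> g' \<in> carrier G \<Longrightarrow>
   (K #>\<^bsub>G\<^esub> g) \<otimes>\<^bsub>G Mod K\<^esub> (K #>\<^bsub>G\<^esub> g') = K #>\<^bsub>G\<^esub> (g \<otimes>\<^bsub>G\<^esub> g')"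
  by (simp add: K.rcos_sum)

lemma inv_cos: "g \<in> carrier G \<Longrightarrow> inv\<^bsub>G Mod K\<^esub> (K #>\<^bsub>G\<^esub> g) = K #>\<^bsub>G\<^esub> (inv\<^bsub>G\<^esub> g)"
  by (simp add: K.inv_FactGroup cosK K.rcos_inv)

lemma cos_K: "k \<in> K \<Longrightarrow> g \<in> carrier G \<Longrightarrow> K #>\<^bsub>G\<^esub> (g \<otimes>\<^bsub>G\<^esub> k) = K #>\<^bsub>G\<^esub> g"
proof -
  assume k: "k \<in> K" and g: "g \<in> carrier G"
  have kc: "k \<in> carrier G" using k K.subset by auto
  have "K #>\<^bsub>G\<^esub> (g \<otimes>\<^bsub>G\<^esub> k) = (K #>\<^bsub>G\<^esub> g) \<otimes>\<^bsub>G Mod K\<^esub> (K #>\<^bsub>G\<^esub> k)"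
    using mult_cos[OF g kc] by simp
  also have "K #>\<^bsub>G\<^esub> k = K" using K.rcos_const[OF grpG k] .
  also have "(K #>\<^bsub>G\<^esub> g) \<otimes>\<^bsub>G Mod K\<^esub> K = K #>\<^bsub>G\<^esub> g"
    using monoid.r_one[OF group.is_monoid[OF grpGK] cosK[OF g]] by simp
  finally show ?thesis .
qed

lemma pi_one: "n \<in> carrier N \<Longrightarrow> p (i n) = \<one>\<^bsub>Q\<^esub>"
  using ker by (auto simp: kernel_def)

definition W where "W = (\<lambda>n. K #>\<^bsub>G\<^esub> i n) ` carrier N"

lemma W_carrier: "w \<in> W \<Longrightarrow> w \<in> carrier (G Mod K)"
  by (auto simp: W_def intro!: cosK)

lemma W_mult: "w \<in> W \<Longrightarrow> w' \<in> W \<Longrightarrow> w \<otimes>\<^bsub>G Mod K\<^esub> w' \<in> W"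
proof -
  assume "w \<in> W" "w' \<in> W"
  then obtain n n' where n: "n \<in> carrier N" "n' \<in> carrier N" "w = K #>\<^bsub>G\<^esub> i n" "w' = K #>\<^bsub>G\<^esub> i n'"
    by (auto simp: W_def)
  then have "w \<otimes>\<^bsub>G Mod K\<^esub> w' = K #>\<^bsub>G\<^esub> i (n \<otimes>\<^bsub>N\<^esub> n')"
    by (simp add: K.rcos_sum ih.hom_mult)
  then show ?thesis using n unfolding W_def by blast
qed

lemma W_inv: "w \<in> W \<Longrightarrow> inv\<^bsub>G Mod K\<^esub> w \<in> W"
proof -
  assume "w \<in> W"
  then obtain n where n: "n \<in> carrier N" "w = K #>\<^bsub>G\<^esub> i n"
    by (auto simp: W_def)
  then have "inv\<^bsub>G Mod K\<^esub> w = K #>\<^bsub>G\<^esub> i (inv\<^bsub>N\<^esub> n)"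
    by (simp add: inv_cos)
  then show ?thesis using n unfolding W_def by blast
qed

lemma W_conj: "U \<in> carrier (G Mod K) \<Longrightarrow> w \<in> W \<Longrightarrow> U \<otimes>\<^bsub>G Mod K\<^esub> w \<otimes>\<^bsub>G Mod K\<^esub> inv\<^bsub>G Mod K\<^esub> U \<in> W"
proof -
  assume U: "U \<in> carrier (G Mod K)" and w: "w \<in> W"
  obtain g where g: "g \<in> carrier G" "U = K #>\<^bsub>G\<^esub> g" using cK[OF U] by blast
  obtain n where n: "n \<in> carrier N" "w = K #>\<^bsub>G\<^esub> i n" using w by (auto simp: W_def)
  have "g \<otimes>\<^bsub>G\<^esub> i n \<otimes>\<^bsub>G\<^esub> inv\<^bsub>G\<^esub> g \<in> kernel G Q p"
    using g n by (auto simp: kernel_def ph.hom_mult ph.hom_inv pi_one)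
  then obtain n' where n': "n' \<in> carrier N" "g \<otimes>\<^bsub>G\<^esub> i n \<otimes>\<^bsub>G\<^esub> inv\<^bsub>G\<^esub> g = i n'"
    using ker by (metis imageE)
  have "U \<otimes>\<^bsub>G Mod K\<^esub> w \<otimes>\<^bsub>G Mod K\<^esub> inv\<^bsub>G Mod K\<^esub> U = K #>\<^bsub>G\<^esub> (g \<otimes>\<^bsub>G\<^esub> i n \<otimes>\<^bsub>G\<^esub> inv\<^bsub>G\<^esub> g)"
    using g n by (simp add: inv_cos K.rcos_sum)
  then show ?thesis using n' by (auto simp: W_def)
qed


lemma K2_normal: "p ` K \<lhd> Q"
proof -
  have sg: "subgroup (p ` K) Q" using ph.subgroup_img_is_subgroup[OF K.subgroup_axioms] .
  have "\<forall>x\<in>carrier Q. \<forall>h\<in>p ` K. x \<otimes>\<^bsub>Q\<^esub> h \<otimes>\<^bsub>Q\<^esub> inv\<^bsub>Q\<^esub> x \<in> p ` K"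
  proof (intro ballI)
    fix x h assume x: "x \<in> carrier Q" and h: "h \<in> p ` K"
    obtain g where g: "g \<in> carrier G" "x = p g" using x psurj by auto
    obtain k where k: "k \<in> K" "h = p k" using h by auto
    have kc: "k \<in> carrier G" using k K.subset by auto
    have "g \<otimes>\<^bsub>G\<^esub> k \<otimes>\<^bsub>G\<^esub> inv\<^bsub>G\<^esub> g \<in> K"
      using K.inv_op_closed2[OF g(1) k(1)] by simp
    moreover have "p (g \<otimes>\<^bsub>G\<^esub> k \<otimes>\<^bsub>G\<^esub> inv\<^bsub>G\<^esub> g) = x \<otimes>\<^bsub>Q\<^esub> h \<otimes>\<^bsub>Q\<^esub> inv\<^bsub>Q\<^esub> x"
      using g k kc by (simp add: ph.hom_mult ph.hom_inv)
    ultimately show "x \<otimes>\<^bsub>Q\<^esub> h \<otimes>\<^bsub>Q\<^esub> inv\<^bsub>Q\<^esub> x \<in> p ` K" by (metis image_eqI)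
  qed
  then show ?thesis using sg Q.normal_inv_iff by blast
qed

lemma rep_cos:
  assumes "U \<in> carrier (G Mod K)"
  shows "(SOME g. g \<in> U) \<in> carrier G" "U = K #>\<^bsub>G\<^esub> (SOME g. g \<in> U)"
proof -
  obtain g where g: "g \<in> carrier G" "U = K #>\<^bsub>G\<^esub> g" using cK[OF assms] by blast
  have "g \<in> U" using g G.rcos_self[OF g(1) K.subgroup_axioms] by simp
  then have r: "(SOME g. g \<in> U) \<in> U" by (rule someI)
  then show "(SOME g. g \<in> U) \<in> carrier G" using g K.elemrcos_carrier[OF grpG] by blast
  show "U = K #>\<^bsub>G\<^esub> (SOME g. g \<in> U)"
    using g r G.repr_independence[OF _ g(1) K.subgroup_axioms] by blast
qed

lemma Q_embed:
  fixes B :: "('d, 'e) monoid_scheme"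
  assumes grpB: "group B" and rh: "\<rho> \<in> hom B (G Mod K)"
    and rW: "\<And>t. t \<in> carrier B \<Longrightarrow> \<rho> t \<in> W \<Longrightarrow> t = \<one>\<^bsub>B\<^esub>"
  shows "\<exists>K2 \<sigma>. K2 \<lhd> Q \<and> \<sigma> \<in> hom B (Q Mod K2) \<and> inj_on \<sigma> (carrier B)"
proof -
  interpret B: group B by fact
  interpret GK: group "G Mod K" by (rule grpGK)
  interpret rho: group_hom B "G Mod K" \<rho> by (simp add: group_hom_def group_hom_axioms_def grpB grpGK rh)
  define K2 where "K2 = p ` K"
  have nK2: "K2 \<lhd> Q" unfolding K2_def by (rule K2_normal)
  interpret K2: normal K2 Q by (rule nK2)
  interpret QK: group "Q Mod K2" by (rule K2.factorgroup_is_group)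
  define \<gamma> where "\<gamma> = (\<lambda>g. K2 #>\<^bsub>Q\<^esub> p g)"
  have gh: "\<gamma> \<in> hom G (Q Mod K2)" unfolding \<gamma>_def
    using hom_compose[OF phom K2.r_coset_hom_Mod] by (simp add: comp_def)
  interpret gam: group_hom G "Q Mod K2" \<gamma> by (simp add: group_hom_def group_hom_axioms_def grpG gh QK.is_group)
  have gk: "\<gamma> k = \<one>\<^bsub>Q Mod K2\<^esub>" if "k \<in> K" for k
    using that K2.rcos_const[OF grpQ] by (simp add: \<gamma>_def K2_def)
  have gK: "\<gamma> (k \<otimes>\<^bsub>G\<^esub> g) = \<gamma> g" if "k \<in> K" "g \<in> carrier G" for k g
  proof -
    have kc: "k \<in> carrier G" using that K.subset by auto
    have "\<gamma> (k \<otimes>\<^bsub>G\<^esub> g) = \<gamma> k \<otimes>\<^bsub>Q Mod K2\<^esub> \<gamma> g" using kc that(2) by (rule gam.hom_mult)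
    also have "\<dots> = \<one>\<^bsub>Q Mod K2\<^esub> \<otimes>\<^bsub>Q Mod K2\<^esub> \<gamma> g" using gk[OF that(1)] by simp
    also have "\<dots> = \<gamma> g" using gam.hom_closed[OF that(2)] by (rule QK.l_one)
    finally show ?thesis .
  qed
  define rep where "rep = (\<lambda>U::'b set. SOME g. g \<in> U)"
  have repc: "rep (\<rho> t) \<in> carrier G" and repe: "\<rho> t = K #>\<^bsub>G\<^esub> rep (\<rho> t)" if "t \<in> carrier B" for t
    using rep_cos[OF rho.hom_closed[OF that]] by (simp_all add: rep_def)
  define \<sigma> where "\<sigma> = (\<lambda>t. \<gamma> (rep (\<rho> t)))"
  have "\<sigma> \<in> hom B (Q Mod K2)"
  proof (rule homI)
    fix t assume "t \<in> carrier B"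
    then show "\<sigma> t \<in> carrier (Q Mod K2)" unfolding \<sigma>_def using repc gam.hom_closed by blast
  next
    fix s t assume s: "s \<in> carrier B" and t: "t \<in> carrier B"
    let ?x = "rep (\<rho> s)" and ?y = "rep (\<rho> t)"
    have "\<rho> (s \<otimes>\<^bsub>B\<^esub> t) = K #>\<^bsub>G\<^esub> (?x \<otimes>\<^bsub>G\<^esub> ?y)"
      using s t repe[OF s] repe[OF t] repc[OF s] repc[OF t]
      by (metis rho.hom_mult mult_cos)
    then have "rep (\<rho> (s \<otimes>\<^bsub>B\<^esub> t)) \<in> K #>\<^bsub>G\<^esub> (?x \<otimes>\<^bsub>G\<^esub> ?y)"
      using repe[of "s \<otimes>\<^bsub>B\<^esub> t"] repc[of "s \<otimes>\<^bsub>B\<^esub> t"] s t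
      by (metis B.m_closed G.rcos_self K.subgroup_axioms)
    then obtain k where k: "k \<in> K" "rep (\<rho> (s \<otimes>\<^bsub>B\<^esub> t)) = k \<otimes>\<^bsub>G\<^esub> (?x \<otimes>\<^bsub>G\<^esub> ?y)"
      by (auto simp: r_coset_def)
    show "\<sigma> (s \<otimes>\<^bsub>B\<^esub> t) = \<sigma> s \<otimes>\<^bsub>Q Mod K2\<^esub> \<sigma> t"
      unfolding \<sigma>_def using gK[OF k(1) G.m_closed[OF repc[OF s] repc[OF t]]] k(2)
        gam.hom_mult[OF repc[OF s] repc[OF t]] by simp
  qed
  moreover have "inj_on \<sigma> (carrier B)"
  proof (rule inj_onI)
    fix s t assume s: "s \<in> carrier B" and t: "t \<in> carrier B" and eq: "\<sigma> s = \<sigma> t"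
    let ?x = "rep (\<rho> s)" and ?y = "rep (\<rho> t)"
    have xc: "?x \<in> carrier G" and yc: "?y \<in> carrier G" using repc s t by auto
    have "\<gamma> (?x \<otimes>\<^bsub>G\<^esub> inv\<^bsub>G\<^esub> ?y) = \<one>\<^bsub>Q Mod K2\<^esub>"
      using eq xc yc unfolding \<sigma>_def
      by (metis QK.r_inv gam.hom_closed gam.hom_inv gam.hom_mult G.inv_closed)
    then have "K2 #>\<^bsub>Q\<^esub> p (?x \<otimes>\<^bsub>G\<^esub> inv\<^bsub>G\<^esub> ?y) = K2" by (simp add: \<gamma>_def)
    then have "p (?x \<otimes>\<^bsub>G\<^esub> inv\<^bsub>G\<^esub> ?y) \<in> K2"
      using Q.rcos_self[OF _ K2.subgroup_axioms] xc yc by (metis G.inv_closed G.m_closed ph.hom_closed)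
    then obtain k where k: "k \<in> K" "p (?x \<otimes>\<^bsub>G\<^esub> inv\<^bsub>G\<^esub> ?y) = p k" by (auto simp: K2_def)
    have kc: "k \<in> carrier G" using k K.subset by auto
    have "?x \<otimes>\<^bsub>G\<^esub> inv\<^bsub>G\<^esub> ?y \<otimes>\<^bsub>G\<^esub> inv\<^bsub>G\<^esub> k \<in> kernel G Q p"
      using k kc xc yc by (simp add: kernel_def ph.hom_mult ph.hom_inv Q.r_inv ph.hom_closed)
    then obtain n where n: "n \<in> carrier N" "i n = ?x \<otimes>\<^bsub>G\<^esub> inv\<^bsub>G\<^esub> ?y \<otimes>\<^bsub>G\<^esub> inv\<^bsub>G\<^esub> k"
      using ker by (metis imageE)
    have xy: "?x \<otimes>\<^bsub>G\<^esub> inv\<^bsub>G\<^esub> ?y = i n \<otimes>\<^bsub>G\<^esub> k"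
      using n kc xc yc by (simp add: G.m_assoc)
    have "\<rho> (s \<otimes>\<^bsub>B\<^esub> inv\<^bsub>B\<^esub> t) = K #>\<^bsub>G\<^esub> (?x \<otimes>\<^bsub>G\<^esub> inv\<^bsub>G\<^esub> ?y)"
      using s t repe[OF s] repe[OF t] xc yc
      by (metis B.inv_closed rho.hom_mult rho.hom_inv mult_cos inv_cos G.inv_closed)
    also have "\<dots> = K #>\<^bsub>G\<^esub> i n" unfolding xy using cos_K[OF k(1) ih.hom_closed[OF n(1)]] .
    finally have rr: "\<rho> (s \<otimes>\<^bsub>B\<^esub> inv\<^bsub>B\<^esub> t) = K #>\<^bsub>G\<^esub> i n" .
    have "\<rho> (s \<otimes>\<^bsub>B\<^esub> inv\<^bsub>B\<^esub> t) \<in> W" unfolding W_def rr using n(1) by (rule imageI)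
    then have e1: "s \<otimes>\<^bsub>B\<^esub> inv\<^bsub>B\<^esub> t = \<one>\<^bsub>B\<^esub>" by (rule rW[OF B.m_closed[OF s B.inv_closed[OF t]]])
    have "s = s \<otimes>\<^bsub>B\<^esub> inv\<^bsub>B\<^esub> t \<otimes>\<^bsub>B\<^esub> t" using s t by (simp add: B.m_assoc)
    then show "s = t" using e1 t by simp
  qed
  ultimately show ?thesis using nK2 by blast
qed


lemma N_embed:
  fixes B :: "('d, 'e) monoid_scheme"
  assumes grpB: "group B" and ps: "\<psi> \<in> hom B (G Mod K)" and pinj: "inj_on \<psi> (carrier B)"
    and pW: "\<And>a. a \<in> carrier B \<Longrightarrow> \<psi> a \<in> W"
  shows "\<exists>K1 \<sigma>. K1 \<lhd> N \<and> \<sigma> \<in> hom B (N Mod K1) \<and> inj_on \<sigma> (carrier B)"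
proof -
  interpret B: group B by fact
  interpret GK: group "G Mod K" by (rule grpGK)
  define f1 where "f1 = (\<lambda>n. K #>\<^bsub>G\<^esub> i n)"
  have f1h: "f1 \<in> hom N (G Mod K)" unfolding f1_def
    using hom_compose[OF ihom K.r_coset_hom_Mod] by (simp add: comp_def)
  interpret f: group_hom N "G Mod K" f1 by (simp add: group_hom_def group_hom_axioms_def grpN grpGK f1h)
  define K1 where "K1 = kernel N (G Mod K) f1"
  have nK1: "K1 \<lhd> N" unfolding K1_def by (rule f.normal_kernel)
  interpret K1: normal K1 N by (rule nK1)
  define \<theta> where "\<theta> = (\<lambda>U. the_elem (f1 ` U))"
  have th_hom: "\<theta> \<in> hom (N Mod K1) (G Mod K)" unfolding \<theta>_def K1_def by (rule f.FactGroup_hom)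
  have th_inj: "inj_on \<theta> (carrier (N Mod K1))" unfolding \<theta>_def K1_def by (rule f.FactGroup_inj_on)
  have th_cos: "\<theta> (K1 #>\<^bsub>N\<^esub> n) = f1 n" if n: "n \<in> carrier N" for n
  proof -
    have "f1 ` (K1 #>\<^bsub>N\<^esub> n) = {f1 n}"
    proof
      show "f1 ` (K1 #>\<^bsub>N\<^esub> n) \<subseteq> {f1 n}"
      proof
        fix z assume "z \<in> f1 ` (K1 #>\<^bsub>N\<^esub> n)"
        then obtain x where x: "x \<in> K1 #>\<^bsub>N\<^esub> n" "z = f1 x" by (rule imageE)
        then obtain h where h0: "h \<in> K1" "x = h \<otimes>\<^bsub>N\<^esub> n" unfolding r_coset_def by blast
        then have h: "h \<in> K1" "z = f1 (h \<otimes>\<^bsub>N\<^esub> n)" using x(2) by simp_all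
        have hc: "h \<in> carrier N" and h1: "f1 h = \<one>\<^bsub>G Mod K\<^esub>" using h(1) unfolding K1_def kernel_def mem_Collect_eq by blast+
        have "z = f1 h \<otimes>\<^bsub>G Mod K\<^esub> f1 n" unfolding h(2) by (rule f.hom_mult[OF hc n])
        also have "\<dots> = f1 n" unfolding h1 by (rule GK.l_one[OF f.hom_closed[OF n]])
        finally show "z \<in> {f1 n}" by simp
      qed
      have "n \<in> K1 #>\<^bsub>N\<^esub> n" using N.rcos_self[OF n K1.subgroup_axioms] .
      then show "{f1 n} \<subseteq> f1 ` (K1 #>\<^bsub>N\<^esub> n)" by blast
    qed
    then show ?thesis unfolding \<theta>_def by (simp only: the_elem_eq)
  qed
  define nr where "nr = (\<lambda>a. SOME n. n \<in> carrier N \<and> \<psi> a = f1 n)"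
  have nr: "nr a \<in> carrier N \<and> \<psi> a = f1 (nr a)" if "a \<in> carrier B" for a
  proof -
    have "\<exists>n. n \<in> carrier N \<and> \<psi> a = f1 n" using pW[OF that] by (auto simp: W_def f1_def)
    then show ?thesis unfolding nr_def by (rule someI_ex)
  qed
  define \<sigma> where "\<sigma> = (\<lambda>a. K1 #>\<^bsub>N\<^esub> nr a)"
  have sc: "\<sigma> a \<in> carrier (N Mod K1)" if "a \<in> carrier B" for a
    using nr[OF that] by (auto simp: \<sigma>_def carrier_FactGroup)
  have ths: "\<theta> (\<sigma> a) = \<psi> a" if "a \<in> carrier B" for a
    using nr[OF that] th_cos by (simp add: \<sigma>_def)
  interpret th: group_hom "N Mod K1" "G Mod K" \<theta>
    by (simp add: group_hom_def group_hom_axioms_def K1.factorgroup_is_group grpGK th_hom)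
  interpret psh: group_hom B "G Mod K" \<psi>
    by (simp add: group_hom_def group_hom_axioms_def grpB grpGK ps)
  have "\<sigma> \<in> hom B (N Mod K1)"
  proof (rule homI)
    fix a assume "a \<in> carrier B" then show "\<sigma> a \<in> carrier (N Mod K1)" by (rule sc)
  next
    fix a b assume a: "a \<in> carrier B" and b: "b \<in> carrier B"
    have e1: "\<theta> (\<sigma> (a \<otimes>\<^bsub>B\<^esub> b)) = \<theta> (\<sigma> a \<otimes>\<^bsub>N Mod K1\<^esub> \<sigma> b)"
      using ths[OF B.m_closed[OF a b]] ths[OF a] ths[OF b] th.hom_mult[OF sc[OF a] sc[OF b]] psh.hom_mult[OF a b] by simp
    have e2: "\<sigma> a \<otimes>\<^bsub>N Mod K1\<^esub> \<sigma> b \<in> carrier (N Mod K1)"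
      using sc[OF a] sc[OF b] by (rule monoid.m_closed[OF group.is_monoid[OF K1.factorgroup_is_group]])
    show "\<sigma> (a \<otimes>\<^bsub>B\<^esub> b) = \<sigma> a \<otimes>\<^bsub>N Mod K1\<^esub> \<sigma> b"
      by (rule inj_onD[OF th_inj e1 sc[OF B.m_closed[OF a b]] e2])
  qed
  moreover have "inj_on \<sigma> (carrier B)"
  proof (rule inj_onI)
    fix a b assume a: "a \<in> carrier B" and b: "b \<in> carrier B" and "\<sigma> a = \<sigma> b"
    then have e: "\<psi> a = \<psi> b" using ths[OF a] ths[OF b] by simp
    show "a = b" by (rule inj_onD[OF pinj e a b])
  qed
  ultimately show ?thesis using nK1 by blast
qed

end


theorem lemma1p12:
  fixes N :: "('a, 'x) monoid_scheme" and G :: "('b, 'y) monoid_scheme"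
    and Q :: "('c, 'z) monoid_scheme"
  assumes "short_exact N G Q i p"
    and "SQ_universal G"
  shows "SQ_universal N \<or> SQ_universal Q"
proof (rule ccontr)
  assume nq: "\<not> (SQ_universal N \<or> SQ_universal Q)"
  then obtain B1 :: "nat monoid" where gB1: "group B1"
    and B1bad: "\<And>K h. \<not> (K \<lhd> N \<and> h \<in> hom B1 (N Mod K) \<and> inj_on h (carrier B1))"
    unfolding SQ_universal_def by blast
  from nq obtain B2 :: "nat monoid" where gB2: "group B2"
    and B2bad: "\<And>K h. \<not> (K \<lhd> Q \<and> h \<in> hom B2 (Q Mod K) \<and> inj_on h (carrier B2))"
    unfolding SQ_universal_def by blast
  interpret B1: group B1 by (rule gB1)
  interpret B2: group B2 by (rule gB2)
  interpret PG: group "PG :: (nat \<times> nat \<times> int \<Rightarrow> nat \<times> nat \<times> int) monoid" by (rule group_PG)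
  have bijT: "bij (Tp B2 t)" if "t \<in> carrier B2" for t
    by (rule o_bij[of "Tp B2 (inv\<^bsub>B2\<^esub> t)"]) (simp_all add: Tp_comp[OF gB2] that Tp_one[OF gB2])
  have bijZ: "bij (Zp B2 d)" for d
    by (rule o_bij[of "Zp B2 (-d)"]) (simp_all add: Zp_comp Zp_zero)
  have bijGp: "bij (Gp B1 B2 a)" if "a \<in> carrier B1" for a
    by (rule o_bij[of "Gp B1 B2 (inv\<^bsub>B1\<^esub> a)"]) (simp_all add: Gp_comp[OF gB1] that Gp_one[OF gB1])
  have bijE: "bij (Ep B1 B2 a)" if "a \<in> carrier B1" for a
    by (rule o_bij[of "Ep B1 B2 (inv\<^bsub>B1\<^esub> a)"]) (simp_all add: Ep_comp[OF gB1] that Ep_one[OF gB1])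
  define Gen where "Gen = Tp B2 ` carrier B2 \<union> {Zp B2 1, Zp B2 (-1)} \<union> Gp B1 B2 ` carrier B1 \<union> Ep B1 B2 ` carrier B1"
  have GenPG: "Gen \<subseteq> carrier PG" unfolding Gen_def using bijT bijZ bijGp bijE by auto
  have cB1: "countable (carrier B1)" by (rule countable_subset[OF subset_UNIV]) simp
  have cB2: "countable (carrier B2)" by (rule countable_subset[OF subset_UNIV]) simp
  have cGen: "countable Gen" unfolding Gen_def using cB1 cB2 by auto
  define Hg where "Hg = (PG :: (nat \<times> nat \<times> int \<Rightarrow> nat \<times> nat \<times> int) monoid)\<lparr>carrier := generate PG Gen\<rparr>"
  have sgH: "subgroup (generate PG Gen) PG" by (rule PG.generate_is_subgroup[OF GenPG])
  have gHg: "group Hg" unfolding Hg_def by (rule subgroup.subgroup_is_group[OF sgH group_PG])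
  interpret Hg: group Hg by (rule gHg)
  have cHg: "countable (carrier Hg)" unfolding Hg_def using generate_PG_countable[OF cGen GenPG] by simp
  have Hg_mult: "x \<otimes>\<^bsub>Hg\<^esub> y = x \<circ> y" for x y by (simp add: Hg_def)
  have Hg_one: "\<one>\<^bsub>Hg\<^esub> = id" by (simp add: Hg_def)
  have genH: "x \<in> carrier Hg" if "x \<in> Gen" for x
    using that unfolding Hg_def by (simp add: generate.incl)
  have TH: "Tp B2 t \<in> carrier Hg" if "t \<in> carrier B2" for t using that by (intro genH) (auto simp: Gen_def)
  have ZH: "Zp B2 1 \<in> carrier Hg" "Zp B2 (-1) \<in> carrier Hg" by (intro genH; auto simp: Gen_def)+
  have GH: "Gp B1 B2 a \<in> carrier Hg" if "a \<in> carrier B1" for a using that by (intro genH) (auto simp: Gen_def)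
  have EH: "Ep B1 B2 a \<in> carrier Hg" if "a \<in> carrier B1" for a using that by (intro genH) (auto simp: Gen_def)
  have invT: "inv\<^bsub>Hg\<^esub> (Tp B2 t) = Tp B2 (inv\<^bsub>B2\<^esub> t)" if t: "t \<in> carrier B2" for t
    by (rule Hg.inv_equality) (simp_all add: Hg_mult Hg_one TH t Tp_comp[OF gB2] Tp_one[OF gB2])
  have invZ: "inv\<^bsub>Hg\<^esub> (Zp B2 1) = Zp B2 (-1)"
    by (rule Hg.inv_equality) (simp_all add: Hg_mult Hg_one ZH Zp_comp Zp_zero)
  have invG: "inv\<^bsub>Hg\<^esub> (Gp B1 B2 a) = Gp B1 B2 (inv\<^bsub>B1\<^esub> a)" if a: "a \<in> carrier B1" for a
    by (rule Hg.inv_equality) (simp_all add: Hg_mult Hg_one GH a Gp_comp[OF gB1] Gp_one[OF gB1])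
  have Thom: "Tp B2 \<in> hom B2 Hg"
    by (rule homI) (simp_all add: TH Hg_mult Tp_comp[OF gB2])
  have Tinj: "inj_on (Tp B2) (carrier B2)"
  proof (rule inj_onI)
    fix s t assume s: "s \<in> carrier B2" and t: "t \<in> carrier B2" and e: "Tp B2 s = Tp B2 t"
    have "(0, s, 0) = Tp B2 s (0, \<one>\<^bsub>B2\<^esub>, 0)" using s by (simp add: Tp_def)
    also have "\<dots> = Tp B2 t (0, \<one>\<^bsub>B2\<^esub>, 0)" by (simp only: e)
    also have "\<dots> = (0, t, 0)" using t by (simp add: Tp_def)
    finally show "s = t" by simp
  qed
  have Ehom: "Ep B1 B2 \<in> hom B1 Hg"
    by (rule homI) (simp_all add: EH Hg_mult Ep_comp[OF gB1])
  have Einj: "inj_on (Ep B1 B2) (carrier B1)"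
  proof (rule inj_onI)
    fix s t assume s: "s \<in> carrier B1" and t: "t \<in> carrier B1" and e: "Ep B1 B2 s = Ep B1 B2 t"
    have "(s, \<one>\<^bsub>B2\<^esub>, 1) = Ep B1 B2 s (\<one>\<^bsub>B1\<^esub>, \<one>\<^bsub>B2\<^esub>, 1)" using s by (simp add: Ep_def)
    also have "\<dots> = Ep B1 B2 t (\<one>\<^bsub>B1\<^esub>, \<one>\<^bsub>B2\<^esub>, 1)" by (simp only: e)
    also have "\<dots> = (t, \<one>\<^bsub>B2\<^esub>, 1)" using t by (simp add: Ep_def)
    finally show "s = t" by simp
  qed
  obtain H' :: "nat monoid" and f where gH': "group H'" and fh: "f \<in> hom Hg H'" and finj: "inj_on f (carrier Hg)"
    using transport_nat[OF gHg cHg] by blast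
  obtain K h where nK: "K \<lhd> G" and hh: "h \<in> hom H' (G Mod K)" and hinj: "inj_on h (carrier H')"
    using assms(2) gH' unfolding SQ_universal_def by blast
  interpret S: SE N G Q i p K using assms(1) nK by (simp add: SE_def)
  interpret GK: group "G Mod K" by (rule S.grpGK)
  define \<Phi> where "\<Phi> = h \<circ> f"
  have Phom: "\<Phi> \<in> hom Hg (G Mod K)" unfolding \<Phi>_def using fh hh by (rule hom_compose)
  have Pinj: "inj_on \<Phi> (carrier Hg)" unfolding \<Phi>_def
    by (rule comp_inj_on[OF finj inj_on_subset[OF hinj]]) (use fh in \<open>auto simp: hom_def\<close>)
  interpret Ph: group_hom Hg "G Mod K" \<Phi> by (simp add: group_hom_def group_hom_axioms_def gHg S.grpGK Phom)
  show False
  proof (cases "\<exists>t\<in>carrier B2. t \<noteq> \<one>\<^bsub>B2\<^esub> \<and> \<Phi> (Tp B2 t) \<in> S.W")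
    case True
    then obtain t where t: "t \<in> carrier B2" "t \<noteq> \<one>\<^bsub>B2\<^esub>" and tW: "\<Phi> (Tp B2 t) \<in> S.W" by blast
    have EW: "\<Phi> (Ep B1 B2 a) \<in> S.W" if a: "a \<in> carrier B1" for a
    proof -
      let ?g = "Gp B1 B2 (inv\<^bsub>B1\<^esub> a)" and ?z = "Zp B2 1" and ?t = "Tp B2 t"
      have gc: "?g \<in> carrier Hg" using GH a by simp
      have zc: "?z \<in> carrier Hg" using ZH by simp
      have tc: "?t \<in> carrier Hg" using TH t by simp
      have eq: "Ep B1 B2 a = ?g \<otimes>\<^bsub>Hg\<^esub> (?z \<otimes>\<^bsub>Hg\<^esub> ?t \<otimes>\<^bsub>Hg\<^esub> inv\<^bsub>Hg\<^esub> ?z \<otimes>\<^bsub>Hg\<^esub> inv\<^bsub>Hg\<^esub> ?t)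
          \<otimes>\<^bsub>Hg\<^esub> inv\<^bsub>Hg\<^esub> ?g \<otimes>\<^bsub>Hg\<^esub> (?t \<otimes>\<^bsub>Hg\<^esub> ?z \<otimes>\<^bsub>Hg\<^esub> inv\<^bsub>Hg\<^esub> ?t \<otimes>\<^bsub>Hg\<^esub> inv\<^bsub>Hg\<^esub> ?z)"
        using key_identity[OF gB1 gB2 B1.inv_closed[OF a] t] a t
        by (simp add: Hg_mult invT invZ invG)
      let ?G = "\<Phi> ?g" and ?Z = "\<Phi> ?z" and ?T = "\<Phi> ?t"
      have Gc: "?G \<in> carrier (G Mod K)" and Zc: "?Z \<in> carrier (G Mod K)" and Tc: "?T \<in> carrier (G Mod K)"
        using gc zc tc by (simp_all add: Ph.hom_closed)
      have Peq: "\<Phi> (Ep B1 B2 a) = ?G \<otimes>\<^bsub>G Mod K\<^esub> (?Z \<otimes>\<^bsub>G Mod K\<^esub> ?T \<otimes>\<^bsub>G Mod K\<^esub> inv\<^bsub>G Mod K\<^esub> ?Z \<otimes>\<^bsub>G Mod K\<^esub> inv\<^bsub>G Mod K\<^esub> ?T)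
          \<otimes>\<^bsub>G Mod K\<^esub> inv\<^bsub>G Mod K\<^esub> ?G \<otimes>\<^bsub>G Mod K\<^esub> (?T \<otimes>\<^bsub>G Mod K\<^esub> (?Z \<otimes>\<^bsub>G Mod K\<^esub> inv\<^bsub>G Mod K\<^esub> ?T \<otimes>\<^bsub>G Mod K\<^esub> inv\<^bsub>G Mod K\<^esub> ?Z))"
      proof -
        have "\<Phi> (Ep B1 B2 a) = ?G \<otimes>\<^bsub>G Mod K\<^esub> (?Z \<otimes>\<^bsub>G Mod K\<^esub> ?T \<otimes>\<^bsub>G Mod K\<^esub> inv\<^bsub>G Mod K\<^esub> ?Z \<otimes>\<^bsub>G Mod K\<^esub> inv\<^bsub>G Mod K\<^esub> ?T)
          \<otimes>\<^bsub>G Mod K\<^esub> inv\<^bsub>G Mod K\<^esub> ?G \<otimes>\<^bsub>G Mod K\<^esub> (?T \<otimes>\<^bsub>G Mod K\<^esub> ?Z \<otimes>\<^bsub>G Mod K\<^esub> inv\<^bsub>G Mod K\<^esub> ?T \<otimes>\<^bsub>G Mod K\<^esub> inv\<^bsub>G Mod K\<^esub> ?Z)"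
          unfolding eq
          by (simp only: Ph.hom_mult Ph.hom_inv Hg.m_closed Hg.inv_closed gc zc tc)
        also have "?T \<otimes>\<^bsub>G Mod K\<^esub> ?Z \<otimes>\<^bsub>G Mod K\<^esub> inv\<^bsub>G Mod K\<^esub> ?T \<otimes>\<^bsub>G Mod K\<^esub> inv\<^bsub>G Mod K\<^esub> ?Z
            = ?T \<otimes>\<^bsub>G Mod K\<^esub> (?Z \<otimes>\<^bsub>G Mod K\<^esub> inv\<^bsub>G Mod K\<^esub> ?T \<otimes>\<^bsub>G Mod K\<^esub> inv\<^bsub>G Mod K\<^esub> ?Z)"
          using Zc Tc by (simp only: GK.m_assoc GK.m_closed GK.inv_closed)
        finally show ?thesis .
      qed
      have c1: "?Z \<otimes>\<^bsub>G Mod K\<^esub> ?T \<otimes>\<^bsub>G Mod K\<^esub> inv\<^bsub>G Mod K\<^esub> ?Z \<otimes>\<^bsub>G Mod K\<^esub> inv\<^bsub>G Mod K\<^esub> ?T \<in> S.W"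
        by (rule S.W_mult[OF S.W_conj[OF Zc tW] S.W_inv[OF tW]])
      have c2: "?T \<otimes>\<^bsub>G Mod K\<^esub> (?Z \<otimes>\<^bsub>G Mod K\<^esub> inv\<^bsub>G Mod K\<^esub> ?T \<otimes>\<^bsub>G Mod K\<^esub> inv\<^bsub>G Mod K\<^esub> ?Z) \<in> S.W"
        by (rule S.W_mult[OF tW S.W_conj[OF Zc S.W_inv[OF tW]]])
      show ?thesis unfolding Peq by (rule S.W_mult[OF S.W_conj[OF Gc c1] c2])
    qed
    have "Ep B1 B2 ` carrier B1 \<subseteq> carrier Hg" using EH by auto
    then have "\<Phi> \<circ> Ep B1 B2 \<in> hom B1 (G Mod K)" "inj_on (\<Phi> \<circ> Ep B1 B2) (carrier B1)"
      using hom_compose[OF Ehom Phom] comp_inj_on[OF Einj inj_on_subset[OF Pinj]] by auto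
    then obtain K1 \<sigma> where "K1 \<lhd> N" "\<sigma> \<in> hom B1 (N Mod K1)" "inj_on \<sigma> (carrier B1)"
      using S.N_embed[OF gB1, of "\<Phi> \<circ> Ep B1 B2"] EW by auto
    then show False using B1bad by blast
  next
    case False
    have "\<Phi> \<circ> Tp B2 \<in> hom B2 (G Mod K)" using hom_compose[OF Thom Phom] .
    moreover have "t = \<one>\<^bsub>B2\<^esub>" if "t \<in> carrier B2" "(\<Phi> \<circ> Tp B2) t \<in> S.W" for t
      using False that by auto
    ultimately obtain K2 \<sigma> where "K2 \<lhd> Q" "\<sigma> \<in> hom B2 (Q Mod K2)" "inj_on \<sigma> (carrier B2)"
      using S.Q_embed[OF gB2, of "\<Phi> \<circ> Tp B2"] by blast
    then show False using B2bad by blast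
  qed
qed

end
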